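(* Let $\alpha,\beta,\mu\in\mathbb{R}\setminus\{0\}$ with $\Delta:=\alpha^2+\beta^2-2\mu^2>0$, let $x_1,x_2\in\mathbb{R}$, and let $B_\mu=B_{\alpha,\beta,\mu}(t,x;x_1,x_2)$ be the Gardner breather. Then for every fixed $t\in\mathbb{R}$, $B_\mu$ satisfies, as a function of $x$, the nonlinear stationary equation $$B_{\mu,4x}-2(\beta^2-\alpha^2)\big(B_{\mu,xx}+3\mu B_\mu^2+B_\mu^3\big)+(\alpha^2+\beta^2)^2B_\mu+5B_\mu B_{\mu,x}^2+5B_\mu^2B_{\mu,xx}+\tfrac32 B_\mu^5+5\mu B_{\mu,x}^2+10\mu B_\mu B_{\mu,xx}+10\mu^2B_\mu^3+\tfrac{15}{2}\mu B_\mu^4=0,$$ where subscripts $x$, $xx$, $4x$ denote spatial derivatives.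
   Context: Gardner breathers: for $\alpha,\beta,\mu\in\mathbb{R}\setminus\{0\}$ with $\Delta>0$ and $x_1,x_2\in\mathbb{R}$, set $\delta:=\alpha^2-3\beta^2$, $\gamma:=3\alpha^2-\beta^2$, $y_1:=x+\delta t+x_1$, $y_2:=x+\gamma t+x_2$, $$G_\mu(t,x):=\frac{\beta\sqrt{\alpha^2+\beta^2}}{\alpha\sqrt{\Delta}}\sin(\alpha y_1)-\frac{\sqrt2\,\mu\beta\, e^{\beta y_2}}{\Delta},\qquad F_\mu(t,x):=\cosh(\beta y_2)-\frac{\sqrt2\,\mu\beta\,[\alpha\cos(\alpha y_1)-\beta\sin(\alpha y_1)]}{\alpha\sqrt{\alpha^2+\beta^2}\sqrt{\Delta}},$$ and $B_{\alpha,\beta,\mu}(t,x;x_1,x_2):=2\sqrt2\,\partial_x[\arctan(G_\mu/F_\mu)]=2\sqrt2\,\frac{F_\mu\partial_xG_\mu-G_\mu\partial_xF_\mu}{F_\mu^2+G_\mu^2}$. It is a real smooth solution of the Gardner equation $w_t+(w_{xx}+3\mu w^2+w^3)_x=0$. *)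

theory Defs
  imports "HOL-Analysis.Analysis"
begin

definition gardner_Delta :: "real \<Rightarrow> real \<Rightarrow> real \<Rightarrow> real" where
  "gardner_Delta \<alpha> \<beta> \<mu> = \<alpha>^2 + \<beta>^2 - 2 * \<mu>^2"

definition gardner_G :: "real \<Rightarrow> real \<Rightarrow> real \<Rightarrow> real \<Rightarrow> real \<Rightarrow> real \<Rightarrow> real \<Rightarrow> real" where
  "gardner_G \<alpha> \<beta> \<mu> x1 x2 t x =
     (let \<Delta> = gardner_Delta \<alpha> \<beta> \<mu>;
          y1 = x + (\<alpha>^2 - 3*\<beta>^2) * t + x1;
          y2 = x + (3*\<alpha>^2 - \<beta>^2) * t + x2
      in \<beta> * sqrt (\<alpha>^2 + \<beta>^2) / (\<alpha> * sqrt \<Delta>) * sin (\<alpha> * y1)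
         - sqrt 2 * \<mu> * \<beta> * exp (\<beta> * y2) / \<Delta>)"

definition gardner_F :: "real \<Rightarrow> real \<Rightarrow> real \<Rightarrow> real \<Rightarrow> real \<Rightarrow> real \<Rightarrow> real \<Rightarrow> real" where
  "gardner_F \<alpha> \<beta> \<mu> x1 x2 t x =
     (let \<Delta> = gardner_Delta \<alpha> \<beta> \<mu>;
          y1 = x + (\<alpha>^2 - 3*\<beta>^2) * t + x1;
          y2 = x + (3*\<alpha>^2 - \<beta>^2) * t + x2
      in cosh (\<beta> * y2)
         - sqrt 2 * \<mu> * \<beta> * (\<alpha> * cos (\<alpha> * y1) - \<beta> * sin (\<alpha> * y1))
           / (\<alpha> * sqrt (\<alpha>^2 + \<beta>^2) * sqrt \<Delta>))"

definition gardner_breather :: "real \<Rightarrow> real \<Rightarrow> real \<Rightarrow> real \<Rightarrow> real \<Rightarrow> real \<Rightarrow> real \<Rightarrow> real" where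
  "gardner_breather \<alpha> \<beta> \<mu> x1 x2 t x =
     (let F = gardner_F \<alpha> \<beta> \<mu> x1 x2 t; G = gardner_G \<alpha> \<beta> \<mu> x1 x2 t
      in 2 * sqrt 2 * (F x * deriv G x - G x * deriv F x) / ((F x)^2 + (G x)^2))"

end

theory Submission
  imports Defs
begin

lemma cert_alg:
  fixes Rr ff U2 V2 U3 V3 W al be m :: real
  assumes hU2: "U2 = Rr^2 + ff^2 + m* ff"
    and hU3: "U3 = Rr* U2 + ff* V2 + m* V2"
    and h1: "(V3+be* V2+al^2* ff)*(U3-be* U2+al^2* Rr-be* al^2) - (U3+be* U2+al^2* Rr+be* al^2)*(V3-be* V2+al^2* ff) = 2* m* be* W"
    and hp: "p = be^2 - al^2"
    and h2: "(U3-al* V2-be^2* Rr)^2 + (V3+al* U2-be^2* ff-al* be^2)^2 - (U3+al* V2-be^2* Rr)^2 - (V3-al* U2-be^2* ff+al* be^2)^2 = -4* m* al* W"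
  shows "al* be*(al^2+be^2)*(-V3* p - 10* V2* U3 + 10* V2^2* m - 10* U2* V3 + ff* p^2 + 20* ff* V3* m + 10* ff* V2^2 + ff* U2* p + 30* ff* U2^2 - 12* ff^2* p* m + 20* ff^2* V3 - 60* ff^2* U2* m + 40* ff^3* m^2 - 12* ff^3* p - 60* ff^3* U2 + 80* ff^4* m + 40* ff^5 + Rr* V2* p + 60* Rr* U2* V2 + 40* Rr* ff* U3 - 100* Rr* ff* V2* m - 100* Rr* ff^2* V2 + 20* Rr^2* V3 - 12* Rr^2* ff* p - 180* Rr^2* ff* U2 + 160* Rr^2* ff^2* m + 160* Rr^2* ff^3 - 60* Rr^3* V2 + 120* Rr^4* ff) = 0"
proof -
  have e1: "((1/2)* al* be^2 - (1/2)* al^3 - 5* ff* m* al - 5* ff^2* al - 5* Rr^2* al) * ((V3+be* V2+al^2* ff)*(U3-be* U2+al^2* Rr-be* al^2) - (U3+be* U2+al^2* Rr+be* al^2)*(V3-be* V2+al^2* ff) - 2* m* be* W) = 0"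
    using h1 by simp
  have e2: "((1/4)* be^3 - (1/4)* al^2* be - (5/2)* ff* m* be - (5/2)* ff^2* be - (5/2)* Rr^2* be) * ((U3-al* V2-be^2* Rr)^2 + (V3+al* U2-be^2* ff-al* be^2)^2 - (U3+al* V2-be^2* Rr)^2 - (V3-al* U2-be^2* ff+al* be^2)^2 + 4* m* al* W) = 0"
    using h2 by simp
  show ?thesis using e1 e2 unfolding hp hU3 hU2
    by algebra
qed

lemma relA:
  fixes s c ch sh E k1 k2 k3 al be m :: real
  assumes sc: "s^2 + c^2 = 1" and hy: "ch^2 = sh^2 + 1" and hE: "E = ch + sh"
    and K1: "k2* k3 = k1*(be + k3* m)" and K2: "k2* m = k1*(al^2+be^2)" and K3: "k2^2* al^2 = be^2 + k3* be* m"
  shows "(ch - k1 * (al * c - be * s)) * (be^2 * ch + k1 * (al^3 * c - al^2 * be * s))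
       + (k2 * s - k3 * E) * (- k2 * al^2 * s - k3 * be^2 * E)
       - (be * sh + k1 * (al^2 * s + al * be * c))^2 - (k2 * al * c - k3 * be * E)^2
       = m * ((ch - k1 * (al * c - be * s)) * (k2 * al * c - k3 * be * E)
              - (k2 * s - k3 * E) * (be * sh + k1 * (al^2 * s + al * be * c)))"
  using assms by algebra

lemma relB:
  fixes s c ch sh E k1 k2 k3 al be m :: real
  assumes sc: "s^2 + c^2 = 1" and hy: "ch^2 = sh^2 + 1" and hE: "E = ch + sh"
    and K1: "k2* k3 = k1*(be + k3* m)" and K2: "k2* m = k1*(al^2+be^2)" and K3: "k2^2* al^2 = be^2 + k3* be* m"
  shows "(ch - k1 * (al * c - be * s)) * (be^3 * sh - k1 * (al^4 * s + al^3 * be * c))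
       + (k2 * s - k3 * E) * (- k2 * al^3 * c - k3 * be^3 * E)
       - (be * sh + k1 * (al^2 * s + al * be * c)) * (be^2 * ch + k1 * (al^3 * c - al^2 * be * s))
       - (k2 * al * c - k3 * be * E) * (- k2 * al^2 * s - k3 * be^2 * E)
       = m * ((ch - k1 * (al * c - be * s)) * (- k2 * al^2 * s - k3 * be^2 * E)
              - (k2 * s - k3 * E) * (be^2 * ch + k1 * (al^3 * c - al^2 * be * s)))"
  using assms by algebra

lemma Xrel:
  fixes sn c k1 k2 k3 al be m a d :: real
  assumes sc: "sn^2 + c^2 = 1" and ha: "a^2 = al^2+be^2" and a0: "a \<noteq> 0" and d0: "d \<noteq> 0" and al0: "al \<noteq> 0"
    and k1: "k1 = m* be/(al* a* d)" and k2: "k2 = be* a/(al* d)" and k3: "k3 = m* be/d^2"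
  shows "k3^2* d^2 - m^2* k2^2* sn^2 - a^2* k1^2*(al* c-be* sn)^2 - 2* k1* k2* k3*(al* c-be* sn)* sn* d^2 = 0"
proof -
  have "k3^2* d^2 - m^2* k2^2* sn^2 - a^2* k1^2*(al* c-be* sn)^2 - 2* k1* k2* k3*(al* c-be* sn)* sn* d^2
      = m^2* be^2/(al^2* d^2) * (al^2 - a^2* sn^2 - (al* c-be* sn)^2 - 2* be*(al* c-be* sn)* sn)"
    unfolding k1 k2 k3 using a0 d0 al0 by (simp add: field_simps power2_eq_square)
  also have "al^2 - a^2* sn^2 - (al* c-be* sn)^2 - 2* be*(al* c-be* sn)* sn = 0"
    using sc ha by algebra
  finally show ?thesis by simp
qed

lemma lag1:
  fixes a0 a1 b0 b1 D :: real
  assumes hD: "a0^2 + b0^2 = D" and D0: "D \<noteq> 0"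
  shows "((a0* a1+b0* b1)/D)^2 + ((a0* b1-b0* a1)/D)^2 = (a1^2+b1^2)/D"
  using D0 apply (simp add: field_simps power2_eq_square) using hD by algebra

lemma lag2:
  fixes a0 a1 a2 b0 b1 b2 D :: real
  assumes hD: "a0^2 + b0^2 = D" and D0: "D \<noteq> 0"
  shows "((a0* a1+b0* b1)/D)*((a0* a2+b0* b2)/D) + ((a0* b1-b0* a1)/D)*((a0* b2-b0* a2)/D) = (a1* a2+b1* b2)/D"
  using D0 apply (simp add: field_simps power2_eq_square) using hD by algebra

lemma dquot_U:
  fixes a0 a1 a2 b0 b1 b2 D :: real
  assumes hD: "a0^2 + b0^2 = D" and D0: "D \<noteq> 0"
  shows "((a1* a1 + a0* a2 + (b1* b1 + b0* b2)) * D - (a0* a1+b0* b1) * (2* a0* a1 + 2* b0* b1)) / D^2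
     = (a0* a2+b0* b2)/D - ((a0* a1+b0* b1)/D)^2 + ((a0* b1-b0* a1)/D)^2"
  using D0 apply (simp add: field_simps power2_eq_square) using hD by algebra


lemma posD_abs:
  fixes sn c ch E Ei k1 k2 k3 al be m a d :: real
  assumes hch2: "2* ch = E+Ei" and hE: "E* Ei = 1"
    and X: "k3^2* d^2 - m^2* k2^2* sn^2 - a^2* k1^2*(al* c-be* sn)^2 - 2* k1* k2* k3*(al* c-be* sn)* sn* d^2 = 0"
    and hd: "d^2 = a^2 - m^2" and d0: "d \<noteq> 0"
  shows "(ch - k1*(al* c-be* sn))^2 + (k2* sn - k3* E)^2 > 0"
proof -
  define P where "P = al* c-be* sn"
  define A where "A = 1/4 + k3^2"
  define br where "br = 2* k3^2 + k2^2* sn^2 - k1^2* P^2 - 4* k1* k2* k3* P* sn"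
  have id: "4 * (1+4* k3^2)*((ch - k1* P)^2 + (k2* sn - k3* E)^2) = (1+4* k3^2)*(Ei-2* k1* P)^2 + ((1+4* k3^2)* E-2*(k1* P+2* k2* k3* sn))^2 + 2 + 4* br"
    unfolding br_def using hch2 hE by algebra
  have "d^2* br = (k1^2* P^2+k2^2* sn^2)*(a^2+m^2)"
    unfolding br_def P_def using X hd by algebra
  moreover have "(k1^2* P^2+k2^2* sn^2)*(a^2+m^2) \<ge> 0" by simp
  moreover have "d^2 > 0" using d0 by simp
  ultimately have "br \<ge> 0" by (metis zero_le_mult_iff not_less)
  then have "4 * (1+4* k3^2)*((ch - k1* P)^2 + (k2* sn - k3* E)^2) > 0" unfolding id
    by (smt (verit) zero_le_power2 mult_nonneg_nonneg)
  moreover have "1+4* k3^2 > 0" by (simp add: add_pos_nonneg)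
  ultimately show ?thesis unfolding P_def by (smt (verit) mult_pos_pos zero_less_mult_iff)
qed

lemma Lgen1:
  fixes a0 a1 a2 a3 b0 b1 b2 b3 D al be :: real
  assumes hD: "a0^2 + b0^2 = D" and D0: "D \<noteq> 0"
  defines "u1 \<equiv> (a0 * a1 + b0 * b1)/D" and "v1 \<equiv> (a0 * b1 - b0 * a1)/D"
    and "u2 \<equiv> (a0 * a2 + b0 * b2)/D" and "v2 \<equiv> (a0 * b2 - b0 * a2)/D"
    and "u3 \<equiv> (a0 * a3 + b0 * b3)/D" and "v3 \<equiv> (a0 * b3 - b0 * a3)/D"
  shows "(v3 + be * v2 + al^2 * v1) * (u3 - be * u2 + al^2 * u1 - be * al^2)
       - (u3 + be * u2 + al^2 * u1 + be * al^2) * (v3 - be * v2 + al^2 * v1)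
     = ((b3 + be * b2 + al^2 * b1 + al^2 * be * b0) * (a3 - be * a2 + al^2 * a1 - al^2 * be * a0)
       - (a3 + be * a2 + al^2 * a1 + al^2 * be * a0) * (b3 - be * b2 + al^2 * b1 - al^2 * be * b0)) / D"
proof -
  have e1: "u3 + be * u2 + al^2 * u1 + be * al^2 = (a0 * (a3 + be * a2 + al^2 * a1 + al^2 * be * a0) + b0 * (b3 + be * b2 + al^2 * b1 + al^2 * be * b0))/D"
    unfolding u1_def u2_def u3_def using D0 by (simp add: field_simps, (use hD in algebra)?)
  have e2: "v3 + be * v2 + al^2 * v1 = (a0 * (b3 + be * b2 + al^2 * b1 + al^2 * be * b0) - b0 * (a3 + be * a2 + al^2 * a1 + al^2 * be * a0))/D"
    unfolding v1_def v2_def v3_def using D0 by (simp add: field_simps, (use hD in algebra)?)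
  have e3: "u3 - be * u2 + al^2 * u1 - be * al^2 = (a0 * (a3 - be * a2 + al^2 * a1 - al^2 * be * a0) + b0 * (b3 - be * b2 + al^2 * b1 - al^2 * be * b0))/D"
    unfolding u1_def u2_def u3_def using D0 by (simp add: field_simps, (use hD in algebra)?)
  have e4: "v3 - be * v2 + al^2 * v1 = (a0 * (b3 - be * b2 + al^2 * b1 - al^2 * be * b0) - b0 * (a3 - be * a2 + al^2 * a1 - al^2 * be * a0))/D"
    unfolding v1_def v2_def v3_def using D0 by (simp add: field_simps, (use hD in algebra)?)
  have gen: "\<And>p q r w. ((a0*q - b0*p)/D)*((a0*r+b0*w)/D) - ((a0*p+b0*q)/D)*((a0*w-b0*r)/D) = (q*r - p*w)/D"
    using D0 apply (simp add: field_simps power2_eq_square) using hD by algebra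
  show ?thesis unfolding e1 e2 e3 e4 by (rule gen)
qed

lemma Lgen2:
  fixes a0 a1 a2 a3 b0 b1 b2 b3 D al be :: real
  assumes hD: "a0^2 + b0^2 = D" and D0: "D \<noteq> 0"
  defines "u1 \<equiv> (a0 * a1 + b0 * b1)/D" and "v1 \<equiv> (a0 * b1 - b0 * a1)/D"
    and "u2 \<equiv> (a0 * a2 + b0 * b2)/D" and "v2 \<equiv> (a0 * b2 - b0 * a2)/D"
    and "u3 \<equiv> (a0 * a3 + b0 * b3)/D" and "v3 \<equiv> (a0 * b3 - b0 * a3)/D"
  shows "(u3 - al * v2 - be^2 * u1)^2 + (v3 + al * u2 - be^2 * v1 - al * be^2)^2
       - (u3 + al * v2 - be^2 * u1)^2 - (v3 - al * u2 - be^2 * v1 + al * be^2)^2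
     = ((a3 - al * b2 - be^2 * a1 + al * be^2 * b0)^2 + (b3 + al * a2 - be^2 * b1 - al * be^2 * a0)^2
       - (a3 + al * b2 - be^2 * a1 - al * be^2 * b0)^2 - (b3 - al * a2 - be^2 * b1 + al * be^2 * a0)^2) / D"
proof -
  have e1: "u3 - al * v2 - be^2 * u1 = (a0 * (a3 - al * b2 - be^2 * a1 + al * be^2 * b0) + b0 * (b3 + al * a2 - be^2 * b1 - al * be^2 * a0))/D"
    unfolding u1_def v2_def u3_def using D0 by (simp add: field_simps, (use hD in algebra)?)
  have e2: "v3 + al * u2 - be^2 * v1 - al * be^2 = (a0 * (b3 + al * a2 - be^2 * b1 - al * be^2 * a0) - b0 * (a3 - al * b2 - be^2 * a1 + al * be^2 * b0))/D"
    unfolding v1_def u2_def v3_def using D0 by (simp add: field_simps, (use hD in algebra)?)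
  have e3: "u3 + al * v2 - be^2 * u1 = (a0 * (a3 + al * b2 - be^2 * a1 - al * be^2 * b0) + b0 * (b3 - al * a2 - be^2 * b1 + al * be^2 * a0))/D"
    unfolding u1_def v2_def u3_def using D0 by (simp add: field_simps, (use hD in algebra)?)
  have e4: "v3 - al * u2 - be^2 * v1 + al * be^2 = (a0 * (b3 - al * a2 - be^2 * b1 + al * be^2 * a0) - b0 * (a3 + al * b2 - be^2 * a1 - al * be^2 * b0))/D"
    unfolding v1_def u2_def v3_def using D0 by (simp add: field_simps, (use hD in algebra)?)
  have gen: "\<And>p q. ((a0*p + b0*q)/D)^2 + ((a0*q - b0*p)/D)^2 = (p^2+q^2)/D"
    using D0 apply (simp add: field_simps power2_eq_square) using hD by algebra
  define p1 where "p1 = a3 - al * b2 - be^2 * a1 + al * be^2 * b0"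
  define q1 where "q1 = b3 + al * a2 - be^2 * b1 - al * be^2 * a0"
  define p2 where "p2 = a3 + al * b2 - be^2 * a1 - al * be^2 * b0"
  define q2 where "q2 = b3 - al * a2 - be^2 * b1 + al * be^2 * a0"
  have "(u3 - al * v2 - be^2 * u1)^2 + (v3 + al * u2 - be^2 * v1 - al * be^2)^2
       - (u3 + al * v2 - be^2 * u1)^2 - (v3 - al * u2 - be^2 * v1 + al * be^2)^2
      = (p1^2+q1^2)/D - (p2^2+q2^2)/D"
    unfolding e1 e2 e3 e4 using gen[of p1 q1] gen[of p2 q2] unfolding p1_def q1_def p2_def q2_def by linarith
  also have "... = (p1^2+q1^2 - p2^2 - q2^2)/D" by (simp add: diff_divide_distrib add_divide_distrib)
  finally show ?thesis unfolding p1_def q1_def p2_def q2_def .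
qed

lemma fin_alg:
  fixes r mu al be P0 P1 P2 P4 :: real
  assumes r2: "r^2 = 2"
  shows "2 * r * P4 - 2 * (be^2 - al^2) * (2 * r * P2 + 3 * mu * (2 * r * P0)^2 + (2 * r * P0)^3)
     + (al^2 + be^2)^2 * (2 * r * P0) + 5 * (2 * r * P0) * (2 * r * P1)^2 + 5 * (2 * r * P0)^2 * (2 * r * P2)
     + 3/2 * (2 * r * P0)^5 + 5 * mu * (2 * r * P1)^2 + 10 * mu * (2 * r * P0) * (2 * r * P2)
     + 10 * mu^2 * (2 * r * P0)^3 + 15/2 * mu * (2 * r * P0)^4
   = 2 * r * (P4 - 2 * (be^2 - al^2) * (P2 + 6 * (r * mu) * P0^2 + 8 * P0^3) + ((be^2 - al^2)^2 + 4 * (al^2 * be^2)) * P0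
      + 40 * P0 * P1^2 + 40 * P0^2 * P2 + 96 * P0^5 + 10 * (r * mu) * P1^2
      + 20 * (r * mu) * P0 * P2 + 40 * (r * mu)^2 * P0^3 + 120 * (r * mu) * P0^4)"
proof -
  have r3: "r^3 = 2*r" "r^4 = 4" "r^5 = 4*r" using r2 by (simp_all add: power_numeral_reduce)
  have rr: "r*(r*y) = 2*y" for y using r2 by (simp add: power2_eq_square mult.assoc[symmetric])
  show ?thesis by (simp add: algebra_simps power_mult_distrib r2 r3 rr power2_eq_square)
qed

context
  fixes al be mu x1 x2 t :: real
  assumes al0: "al \<noteq> 0" and be0: "be \<noteq> 0" and mu0: "mu \<noteq> 0"
    and Dpos: "gardner_Delta al be mu > 0"
begin

definition "th x = al * (x + (al^2 - 3* be^2) * t + x1)"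
definition "zz x = be * (x + (3* al^2 - be^2) * t + x2)"
definition "aa = sqrt (al^2 + be^2)"
definition "dd = sqrt (gardner_Delta al be mu)"
definition "mm = sqrt 2 * mu"
definition "k1 = sqrt 2 * mu * be / (al * aa * dd)"
definition "k2 = be * aa / (al * dd)"
definition "k3 = sqrt 2 * mu * be / gardner_Delta al be mu"
definition "pp = be^2 - al^2"
definition "qq = al^2 * be^2"

definition "F0 x = cosh (zz x) - k1 * (al * cos (th x) - be * sin (th x))"
definition "F1 x = be * sinh (zz x) + k1 * (al^2 * sin (th x) + al * be * cos (th x))"
definition "F2 x = be^2 * cosh (zz x) + k1 * (al^3 * cos (th x) - al^2 * be * sin (th x))"
definition "F3 x = be^3 * sinh (zz x) - k1 * (al^4 * sin (th x) + al^3 * be * cos (th x))"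
definition "G0 x = k2 * sin (th x) - k3 * exp (zz x)"
definition "G1 x = k2 * al * cos (th x) - k3 * be * exp (zz x)"
definition "G2 x = - k2 * al^2 * sin (th x) - k3 * be^2 * exp (zz x)"
definition "G3 x = - k2 * al^3 * cos (th x) - k3 * be^3 * exp (zz x)"

lemma dth: "(th has_real_derivative al) (at x)"
  unfolding th_def by (auto intro!: derivative_eq_intros)
lemma dzz: "(zz has_real_derivative be) (at x)"
  unfolding zz_def by (auto intro!: derivative_eq_intros)

lemma dF0: "(F0 has_real_derivative F1 x) (at x)"
  unfolding F0_def F1_def
  by (auto intro!: derivative_eq_intros dth dzz simp: algebra_simps power2_eq_square)
lemma dF1: "(F1 has_real_derivative F2 x) (at x)"
  unfolding F1_def F2_def
  by (auto intro!: derivative_eq_intros dth dzz simp: algebra_simps power2_eq_square power3_eq_cube)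
lemma dF2: "(F2 has_real_derivative F3 x) (at x)"
  unfolding F2_def F3_def
  by (auto intro!: derivative_eq_intros dth dzz simp: algebra_simps power2_eq_square power3_eq_cube numeral_eq_Suc)
lemma dF3: "(F3 has_real_derivative (pp * F2 x + qq * F0 x)) (at x)"
  unfolding F3_def F2_def F0_def pp_def qq_def
  by (auto intro!: derivative_eq_intros dth dzz simp: algebra_simps power2_eq_square power3_eq_cube numeral_eq_Suc)
lemma dG0: "(G0 has_real_derivative G1 x) (at x)"
  unfolding G0_def G1_def
  by (auto intro!: derivative_eq_intros dth dzz simp: algebra_simps)
lemma dG1: "(G1 has_real_derivative G2 x) (at x)"
  unfolding G1_def G2_def
  by (auto intro!: derivative_eq_intros dth dzz simp: algebra_simps power2_eq_square)
lemma dG2: "(G2 has_real_derivative G3 x) (at x)"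
  unfolding G2_def G3_def
  by (auto intro!: derivative_eq_intros dth dzz simp: algebra_simps power2_eq_square power3_eq_cube numeral_eq_Suc)
lemma dG3: "(G3 has_real_derivative (pp * G2 x + qq * G0 x)) (at x)"
  unfolding G3_def G2_def G0_def pp_def qq_def
  by (auto intro!: derivative_eq_intros dth dzz simp: algebra_simps power2_eq_square power3_eq_cube numeral_eq_Suc)

lemma F_eq: "gardner_F al be mu x1 x2 t = F0"
  by (auto simp: fun_eq_iff gardner_F_def Let_def F0_def k1_def th_def zz_def aa_def dd_def)
lemma G_eq: "gardner_G al be mu x1 x2 t = G0"
  by (auto simp: fun_eq_iff gardner_G_def Let_def G0_def k2_def k3_def th_def zz_def aa_def dd_def)


lemma Dl0: "gardner_Delta al be mu > 0" using Dpos .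
lemma dd_sq: "dd^2 = gardner_Delta al be mu" unfolding dd_def using Dpos by simp
lemma dd0: "dd > 0" unfolding dd_def using Dpos by simp
lemma aa_sq: "aa^2 = al^2 + be^2" unfolding aa_def by (simp add: add_nonneg_nonneg)
lemma aa0: "aa > 0" unfolding aa_def using al0 by (simp add: add_pos_nonneg)
lemma mm_sq: "mm^2 = 2 * mu^2" unfolding mm_def by (simp add: power_mult_distrib)
lemma dd_mm: "dd^2 = aa^2 - mm^2" unfolding dd_sq aa_sq mm_sq gardner_Delta_def by simp
lemma k1_alt: "k1 = mm * be / (al * aa * dd)" unfolding k1_def mm_def by simp
lemma k3_alt: "k3 = mm * be / dd^2" unfolding k3_def mm_def dd_sq by simp

lemma K1: "k2 * k3 = k1 * (be + k3 * mm)"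
  unfolding k1_alt k2_def k3_alt using al0 aa0 dd0
  by (simp add: field_simps power2_eq_square) (use dd_mm in algebra)
lemma K2: "k2 * mm = k1 * (al^2 + be^2)"
  unfolding k1_alt k2_def using al0 aa0 dd0 aa_sq
  by (simp add: field_simps power2_eq_square)
lemma K3: "k2^2 * al^2 = be^2 + k3 * be * mm"
  unfolding k3_alt k2_def using al0 aa0 dd0
  by (simp add: field_simps power2_eq_square) (use dd_mm aa_sq in algebra)

lemma sq_lemmas: "sin (th x)^2 + cos (th x)^2 = 1" "cosh (zz x)^2 = sinh (zz x)^2 + 1"
   "exp (zz x) = cosh (zz x) + sinh (zz x)"
  by (simp_all add: cosh_square_eq cosh_plus_sinh)

lemma relA_x: "F0 x * F2 x + G0 x * G2 x - F1 x ^2 - G1 x ^2 = mm * (F0 x * G1 x - G0 x * F1 x)"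
  unfolding F0_def F1_def F2_def G0_def G1_def G2_def
  by (rule relA[OF sq_lemmas K1 K2 K3])
lemma relB_x: "F0 x * F3 x + G0 x * G3 x - F1 x * F2 x - G1 x * G2 x = mm * (F0 x * G2 x - G0 x * F2 x)"
  unfolding F0_def F1_def F2_def F3_def G0_def G1_def G2_def G3_def
  by (rule relB[OF sq_lemmas K1 K2 K3])

definition "DD x = F0 x ^2 + G0 x ^2"

lemma DDpos: "DD x > 0"
proof -
  have X: "k3^2* dd^2 - mm^2* k2^2* sin (th x)^2 - aa^2* k1^2*(al* cos (th x)-be* sin (th x))^2 - 2* k1* k2* k3*(al* cos (th x)-be* sin (th x))* sin (th x)* dd^2 = 0"
    by (rule Xrel[OF _ aa_sq _ _ al0 k1_alt k2_def k3_alt]) (use aa0 dd0 in auto)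
  have h2: "2 * cosh (zz x) = exp (zz x) + exp (- zz x)"
    using cosh_plus_sinh[of "zz x"] cosh_minus_sinh[of "zz x"] by linarith
  have "(cosh (zz x) - k1*(al* cos (th x)-be* sin (th x)))^2 + (k2* sin (th x) - k3* exp (zz x))^2 > 0"
    by (rule posD_abs[OF h2 exp_minus_inverse X dd_mm]) (use dd0 in auto)
  then show ?thesis unfolding DD_def F0_def G0_def by simp
qed
lemma DD0: "DD x \<noteq> 0" using DDpos[of x] by simp

lemma rel_c: "(G3 x + be * G2 x + al^2 * G1 x + al^2 * be * G0 x) * (F3 x - be * F2 x + al^2 * F1 x - al^2 * be * F0 x)
   - (F3 x + be * F2 x + al^2 * F1 x + al^2 * be * F0 x) * (G3 x - be * G2 x + al^2 * G1 x - al^2 * be * G0 x)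
   = 2 * mm * be * (be^2 * (al^2+be^2)^2 / gardner_Delta al be mu)"
proof -
  have e: "exp (zz x) = cosh (zz x) + sinh (zz x)" "exp (- zz x) = cosh (zz x) - sinh (zz x)"
    by (simp_all add: cosh_plus_sinh cosh_minus_sinh)
  have a: "F3 x + be * F2 x + al^2 * F1 x + al^2 * be * F0 x = be*(al^2+be^2)* exp (zz x)"
    unfolding F0_def F1_def F2_def F3_def e by algebra
  have b: "G3 x + be * G2 x + al^2 * G1 x + al^2 * be * G0 x = -2* k3* be*(al^2+be^2)* exp (zz x)"
    unfolding G0_def G1_def G2_def G3_def by algebra
  have c: "F3 x - be * F2 x + al^2 * F1 x - al^2 * be * F0 x = - be*(al^2+be^2)* exp (- zz x)"
    unfolding F0_def F1_def F2_def F3_def e by algebra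
  have d: "G3 x - be * G2 x + al^2 * G1 x - al^2 * be * G0 x = 0"
    unfolding G0_def G1_def G2_def G3_def by algebra
  have "exp (zz x) * exp (- zz x) = 1" by (rule exp_minus_inverse)
  then have "(G3 x + be * G2 x + al^2 * G1 x + al^2 * be * G0 x) * (F3 x - be * F2 x + al^2 * F1 x - al^2 * be * F0 x)
   - (F3 x + be * F2 x + al^2 * F1 x + al^2 * be * F0 x) * (G3 x - be * G2 x + al^2 * G1 x - al^2 * be * G0 x)
   = 2 * k3 * be^2 * (al^2+be^2)^2"
    unfolding a b c d by algebra
  also have "... = 2 * mm * be * (be^2 * (al^2+be^2)^2 / gardner_Delta al be mu)"
    unfolding k3_def mm_def by simp
  finally show ?thesis .
qed

lemma rel_d: "(F3 x - al * G2 x - be^2 * F1 x + al * be^2 * G0 x)^2 + (G3 x + al * F2 x - be^2 * G1 x - al * be^2 * F0 x)^2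
       - (F3 x + al * G2 x - be^2 * F1 x - al * be^2 * G0 x)^2 - (G3 x - al * F2 x - be^2 * G1 x + al * be^2 * F0 x)^2
   = - 4 * mm * al * (be^2 * (al^2+be^2)^2 / gardner_Delta al be mu)"
proof -
  have "(F3 x - al * G2 x - be^2 * F1 x + al * be^2 * G0 x)^2 + (G3 x + al * F2 x - be^2 * G1 x - al * be^2 * F0 x)^2
       - (F3 x + al * G2 x - be^2 * F1 x - al * be^2 * G0 x)^2 - (G3 x - al * F2 x - be^2 * G1 x + al * be^2 * F0 x)^2
      = -4 * al^3 * (al^2+be^2)^2 * k1 * k2"
    unfolding F0_def F1_def F2_def F3_def G0_def G1_def G2_def G3_def using sq_lemmas(1)[of x] by algebra
  also have "... = - 4 * mm * al * (be^2 * (al^2+be^2)^2 / gardner_Delta al be mu)"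
  proof -
    have kk: "k1 * k2 = mm * be^2 / (al^2 * dd^2)"
      unfolding k1_alt k2_def using al0 aa0 dd0 by (simp add: field_simps power2_eq_square)
    have "gardner_Delta al be mu \<noteq> 0" using Dpos by simp
    then show ?thesis unfolding mult.assoc[of _ k1 k2] kk dd_sq using al0 by (simp add: field_simps power2_eq_square power3_eq_cube)
  qed
  finally show ?thesis .
qed

definition "Rf x = (F0 x * F1 x + G0 x * G1 x) / DD x"
definition "ff x = (F0 x * G1 x - G0 x * F1 x) / DD x"
definition "U2f x = (F0 x * F2 x + G0 x * G2 x) / DD x"
definition "V2f x = (F0 x * G2 x - G0 x * F2 x) / DD x"
definition "U3f x = (F0 x * F3 x + G0 x * G3 x) / DD x"
definition "V3f x = (F0 x * G3 x - G0 x * F3 x) / DD x"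

lemma DD_eq: "F0 x ^2 + G0 x ^2 = DD x" unfolding DD_def ..

lemma dDD: "(DD has_real_derivative (2 * F0 x * F1 x + 2 * G0 x * G1 x)) (at x)"
proof -
  have "((\<lambda>x. F0 x * F0 x + G0 x * G0 x) has_real_derivative ((F0 x * F1 x + F1 x * F0 x) + (G0 x * G1 x + G1 x * G0 x))) (at x)"
    by (intro DERIV_add DERIV_mult' dF0 dG0)
  moreover have "DD = (\<lambda>x. F0 x * F0 x + G0 x * G0 x)" by (simp add: fun_eq_iff DD_def power2_eq_square)
  ultimately show ?thesis by (simp add: algebra_simps)
qed

lemma dRf: "(Rf has_real_derivative (U2f x - (Rf x * Rf x - ff x * ff x))) (at x)"
proof -
  have n: "((\<lambda>x. F0 x * F1 x + G0 x * G1 x) has_real_derivative ((F0 x * F2 x + F1 x * F1 x) + (G0 x * G2 x + G1 x * G1 x))) (at x)"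
    by (intro DERIV_add DERIV_mult' dF0 dF1 dG0 dG1)
  have e: "Rf = (\<lambda>x. (F0 x * F1 x + G0 x * G1 x) / DD x)" by (simp add: fun_eq_iff Rf_def)
  show ?thesis unfolding e
    apply (rule DERIV_cong[OF DERIV_divide[OF n dDD DD0]])
    unfolding Rf_def ff_def U2f_def using DD0[of x]
    by (simp add: field_simps, (use DD_eq[of x] in algebra)?)
qed
lemma dff: "(ff has_real_derivative (V2f x - (Rf x * ff x + ff x * Rf x))) (at x)"
proof -
  have n: "((\<lambda>x. F0 x * G1 x - G0 x * F1 x) has_real_derivative ((F0 x * G2 x + F1 x * G1 x) - (G0 x * F2 x + G1 x * F1 x))) (at x)"
    by (intro DERIV_diff DERIV_mult' dF0 dF1 dG0 dG1)
  have e: "ff = (\<lambda>x. (F0 x * G1 x - G0 x * F1 x) / DD x)" by (simp add: fun_eq_iff ff_def)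
  show ?thesis unfolding e
    apply (rule DERIV_cong[OF DERIV_divide[OF n dDD DD0]])
    unfolding Rf_def ff_def V2f_def using DD0[of x]
    by (simp add: field_simps, (use DD_eq[of x] in algebra)?)
qed
lemma dU2f: "(U2f has_real_derivative (U3f x - (U2f x * Rf x - V2f x * ff x))) (at x)"
proof -
  have n: "((\<lambda>x. F0 x * F2 x + G0 x * G2 x) has_real_derivative ((F0 x * F3 x + F1 x * F2 x) + (G0 x * G3 x + G1 x * G2 x))) (at x)"
    by (intro DERIV_add DERIV_mult' dF0 dF2 dG0 dG2)
  have e: "U2f = (\<lambda>x. (F0 x * F2 x + G0 x * G2 x) / DD x)" by (simp add: fun_eq_iff U2f_def)
  show ?thesis unfolding e
    apply (rule DERIV_cong[OF DERIV_divide[OF n dDD DD0]])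
    unfolding Rf_def ff_def U2f_def V2f_def U3f_def using DD0[of x]
    by (simp add: field_simps, (use DD_eq[of x] in algebra)?)
qed
lemma dV2f: "(V2f has_real_derivative (V3f x - (U2f x * ff x + V2f x * Rf x))) (at x)"
proof -
  have n: "((\<lambda>x. F0 x * G2 x - G0 x * F2 x) has_real_derivative ((F0 x * G3 x + F1 x * G2 x) - (G0 x * F3 x + G1 x * F2 x))) (at x)"
    by (intro DERIV_diff DERIV_mult' dF0 dF2 dG0 dG2)
  have e: "V2f = (\<lambda>x. (F0 x * G2 x - G0 x * F2 x) / DD x)" by (simp add: fun_eq_iff V2f_def)
  show ?thesis unfolding e
    apply (rule DERIV_cong[OF DERIV_divide[OF n dDD DD0]])
    unfolding Rf_def ff_def U2f_def V2f_def V3f_def using DD0[of x]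
    by (simp add: field_simps, (use DD_eq[of x] in algebra)?)
qed
lemma dU3f: "(U3f has_real_derivative (pp * U2f x + qq - (U3f x * Rf x - V3f x * ff x))) (at x)"
proof -
  have n: "((\<lambda>x. F0 x * F3 x + G0 x * G3 x) has_real_derivative ((F0 x * (pp * F2 x + qq * F0 x) + F1 x * F3 x) + (G0 x * (pp * G2 x + qq * G0 x) + G1 x * G3 x))) (at x)"
    by (intro DERIV_add DERIV_mult' dF0 dF3 dG0 dG3)
  have e: "U3f = (\<lambda>x. (F0 x * F3 x + G0 x * G3 x) / DD x)" by (simp add: fun_eq_iff U3f_def)
  show ?thesis unfolding e
    apply (rule DERIV_cong[OF DERIV_divide[OF n dDD DD0]])
    unfolding Rf_def ff_def U2f_def U3f_def V3f_def using DD0[of x]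
    by (simp add: field_simps, (use DD_eq[of x] in algebra)?)
qed
lemma dV3f: "(V3f has_real_derivative (pp * V2f x - (U3f x * ff x + V3f x * Rf x))) (at x)"
proof -
  have n: "((\<lambda>x. F0 x * G3 x - G0 x * F3 x) has_real_derivative ((F0 x * (pp * G2 x + qq * G0 x) + F1 x * G3 x) - (G0 x * (pp * F2 x + qq * F0 x) + G1 x * F3 x))) (at x)"
    by (intro DERIV_diff DERIV_mult' dF0 dF3 dG0 dG3)
  have e: "V3f = (\<lambda>x. (F0 x * G3 x - G0 x * F3 x) / DD x)" by (simp add: fun_eq_iff V3f_def)
  show ?thesis unfolding e
    apply (rule DERIV_cong[OF DERIV_divide[OF n dDD DD0]])
    unfolding Rf_def ff_def V2f_def U3f_def V3f_def using DD0[of x]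
    by (simp add: field_simps, (use DD_eq[of x] in algebra)?)
qed

definition "Phi0 x = (ff x)"
definition "Phi1 x = (V2f x) - 2* (Rf x)* (ff x)"
definition "Phi2 x = (V3f x) - 3* (ff x)* (U2f x) - 2* (ff x)^3 - 3* (Rf x)* (V2f x) + 6* (Rf x)^2* (ff x)"
definition "Phi3 x = (V2f x)* pp - 6* (U2f x)* (V2f x) - 4* (ff x)* (U3f x) - 12* (ff x)^2* (V2f x) - 4* (Rf x)* (V3f x) + 24* (Rf x)* (ff x)* (U2f x) + 24* (Rf x)* (ff x)^3 + 12* (Rf x)^2* (V2f x) - 24* (Rf x)^3* (ff x)"
definition "Phi4 x = (V3f x)* pp - 10* (V2f x)* (U3f x) - 10* (U2f x)* (V3f x) - 4* (ff x)* qq - 30* (ff x)* (V2f x)^2 - 5* (ff x)* (U2f x)* pp + 30* (ff x)* (U2f x)^2 - 20* (ff x)^2* (V3f x) + 60* (ff x)^3* (U2f x) + 24* (ff x)^5 - 5* (Rf x)* (V2f x)* pp + 60* (Rf x)* (U2f x)* (V2f x) + 40* (Rf x)* (ff x)* (U3f x) + 180* (Rf x)* (ff x)^2* (V2f x) + 20* (Rf x)^2* (V3f x) - 180* (Rf x)^2* (ff x)* (U2f x) - 240* (Rf x)^2* (ff x)^3 - 60* (Rf x)^3* (V2f x) + 120* (Rf x)^4* (ff x)"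


lemma dPhi0: "(Phi0 has_real_derivative Phi1 x) (at x)"
  unfolding Phi0_def[abs_def] Phi1_def
  by (rule DERIV_cong[OF dff]) (simp add: algebra_simps)
lemma dPhi1: "(Phi1 has_real_derivative Phi2 x) (at x)"
  unfolding Phi1_def[abs_def]
  apply (rule DERIV_cong)
   apply (rule derivative_eq_intros dRf dff dU2f dV2f dU3f dV3f refl)+
  unfolding Phi2_def by (simp; algebra)

lemma dPhi2: "(Phi2 has_real_derivative Phi3 x) (at x)"
  unfolding Phi2_def[abs_def]
  apply (rule DERIV_cong)
   apply (rule derivative_eq_intros dRf dff dU2f dV2f dU3f dV3f refl)+
  unfolding Phi3_def by (simp; algebra)
lemma dPhi3: "(Phi3 has_real_derivative Phi4 x) (at x)"
  unfolding Phi3_def[abs_def]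
  apply (rule DERIV_cong)
   apply (rule derivative_eq_intros dRf dff dU2f dV2f dU3f dV3f refl)+
  unfolding Phi4_def by (simp; algebra)

lemma hU2: "U2f x = Rf x ^2 + ff x ^2 + mm * ff x"
proof -
  have l: "Rf x ^2 + ff x ^2 = (F1 x ^2 + G1 x ^2) / DD x"
    unfolding Rf_def ff_def by (rule lag1[OF DD_eq DD0])
  have "U2f x - (F1 x ^2 + G1 x ^2) / DD x = (F0 x * F2 x + G0 x * G2 x - F1 x ^2 - G1 x ^2) / DD x"
    unfolding U2f_def by (simp add: diff_divide_distrib add_divide_distrib)
  also have "... = mm * ff x" unfolding relA_x ff_def by simp
  finally show ?thesis unfolding l[symmetric] by simp
qed
lemma hU3: "U3f x = Rf x * U2f x + ff x * V2f x + mm * V2f x"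
proof -
  have l: "Rf x * U2f x + ff x * V2f x = (F1 x * F2 x + G1 x * G2 x) / DD x"
    unfolding Rf_def ff_def U2f_def V2f_def by (rule lag2[OF DD_eq DD0])
  have "U3f x - (F1 x * F2 x + G1 x * G2 x) / DD x = (F0 x * F3 x + G0 x * G3 x - F1 x * F2 x - G1 x * G2 x) / DD x"
    unfolding U3f_def by (simp add: diff_divide_distrib add_divide_distrib)
  also have "... = mm * V2f x" unfolding relB_x V2f_def by simp
  finally show ?thesis unfolding l[symmetric] by simp
qed

definition "Wc x = be^2 * (al^2+be^2)^2 / gardner_Delta al be mu / DD x"

lemma h1: "(V3f x + be * V2f x + al^2 * ff x) * (U3f x - be * U2f x + al^2 * Rf x - be * al^2)
       - (U3f x + be * U2f x + al^2 * Rf x + be * al^2) * (V3f x - be * V2f x + al^2 * ff x) = 2 * mm * be * Wc x"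
  unfolding Rf_def ff_def U2f_def V2f_def U3f_def V3f_def Lgen1[OF DD_eq DD0] rel_c Wc_def by simp
lemma h2: "(U3f x - al * V2f x - be^2 * Rf x)^2 + (V3f x + al * U2f x - be^2 * ff x - al * be^2)^2
       - (U3f x + al * V2f x - be^2 * Rf x)^2 - (V3f x - al * U2f x - be^2 * ff x + al * be^2)^2 = - 4 * mm * al * Wc x"
  unfolding Rf_def ff_def U2f_def V2f_def U3f_def V3f_def Lgen2[OF DD_eq DD0] rel_d Wc_def by simp

lemma TT0: "-(V3f x)* pp - 10* (V2f x)* (U3f x) + 10* (V2f x)^2* mm - 10* (U2f x)* (V3f x) + (ff x)* pp^2 + 20* (ff x)* (V3f x)* mm + 10* (ff x)* (V2f x)^2 + (ff x)* (U2f x)* pp + 30* (ff x)* (U2f x)^2 - 12* (ff x)^2* pp* mm + 20* (ff x)^2* (V3f x) - 60* (ff x)^2* (U2f x)* mm + 40* (ff x)^3* mm^2 - 12* (ff x)^3* pp - 60* (ff x)^3* (U2f x) + 80* (ff x)^4* mm + 40* (ff x)^5 + (Rf x)* (V2f x)* pp + 60* (Rf x)* (U2f x)* (V2f x) + 40* (Rf x)* (ff x)* (U3f x) - 100* (Rf x)* (ff x)* (V2f x)* mm - 100* (Rf x)* (ff x)^2* (V2f x) + 20* (Rf x)^2* (V3f x) - 12* (Rf x)^2* (ff x)* pp - 180* (Rf x)^2* (ff x)* (U2f x) + 160* (Rf x)^2* (ff x)^2* mm + 160* (Rf x)^2* (ff x)^3 - 60* (Rf x)^3* (V2f x) + 120*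 (Rf x)^4* (ff x) = 0"
proof -
  have "al * be * (al^2+be^2) * (-(V3f x)* pp - 10* (V2f x)* (U3f x) + 10* (V2f x)^2* mm - 10* (U2f x)* (V3f x) + (ff x)* pp^2 + 20* (ff x)* (V3f x)* mm + 10* (ff x)* (V2f x)^2 + (ff x)* (U2f x)* pp + 30* (ff x)* (U2f x)^2 - 12* (ff x)^2* pp* mm + 20* (ff x)^2* (V3f x) - 60* (ff x)^2* (U2f x)* mm + 40* (ff x)^3* mm^2 - 12* (ff x)^3* pp - 60* (ff x)^3* (U2f x) + 80* (ff x)^4* mm + 40* (ff x)^5 + (Rf x)* (V2f x)* pp + 60* (Rf x)* (U2f x)* (V2f x) + 40* (Rf x)* (ff x)* (U3f x) - 100* (Rf x)* (ff x)* (V2f x)* mm - 100* (Rf x)* (ff x)^2* (V2f x) + 20* (Rf x)^2* (V3f x) - 12* (Rf x)^2* (ff x)* pp - 180* (Rf x)^2* (ff x)* (U2f x) + 160* (Rf x)^2* (ff x)^2* mm + 160* (Rf x)^2* (ff x)^3 - 60* (Rf x)^3* (V2f x) + 120* (Rf x)^4* (ff x)) = 0"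
    by (rule cert_alg[OF hU2 hU3 h1 pp_def h2])
  then show ?thesis using al0 be0 by (simp add: add_pos_pos)
qed

lemma B_eq: "gardner_breather al be mu x1 x2 t = (\<lambda>x. 2 * sqrt 2 * Phi0 x)"
proof -
  have dG: "deriv G0 x = G1 x" and dF: "deriv F0 x = F1 x" for x
    using DERIV_imp_deriv[OF dG0] DERIV_imp_deriv[OF dF0] by auto
  show ?thesis
    unfolding gardner_breather_def Let_def F_eq G_eq fun_eq_iff dG dF Phi0_def ff_def DD_def
    by simp
qed

lemma derivB: "deriv (\<lambda>x. 2 * sqrt 2 * Phi0 x) = (\<lambda>x. 2 * sqrt 2 * Phi1 x)"
  "deriv (\<lambda>x. 2 * sqrt 2 * Phi1 x) = (\<lambda>x. 2 * sqrt 2 * Phi2 x)"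
  "deriv (\<lambda>x. 2 * sqrt 2 * Phi2 x) = (\<lambda>x. 2 * sqrt 2 * Phi3 x)"
  "deriv (\<lambda>x. 2 * sqrt 2 * Phi3 x) = (\<lambda>x. 2 * sqrt 2 * Phi4 x)"
  by (auto simp: fun_eq_iff intro!: DERIV_imp_deriv DERIV_cmult dPhi0 dPhi1 dPhi2 dPhi3)

lemma final_ctx:
  defines "B \<equiv> gardner_breather al be mu x1 x2 t"
  shows "(deriv ^^ 4) B x
           - 2 * (be^2 - al^2) * ((deriv ^^ 2) B x + 3 * mu * (B x)^2 + (B x)^3)
           + (al^2 + be^2)^2 * B x
           + 5 * B x * (deriv B x)^2 + 5 * (B x)^2 * (deriv ^^ 2) B x
           + 3/2 * (B x)^5 + 5 * mu * (deriv B x)^2 + 10 * mu * B x * (deriv ^^ 2) B x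
           + 10 * mu^2 * (B x)^3 + 15/2 * mu * (B x)^4 = 0"
proof -
  have f4: "(deriv ^^ 4) f = deriv (deriv (deriv (deriv f)))" and f2: "(deriv ^^ 2) f = deriv (deriv f)" for f :: "real \<Rightarrow> real"
    by (simp_all add: numeral_eq_Suc)
  have Beq: "B = (\<lambda>x. 2 * sqrt 2 * Phi0 x)" unfolding B_def B_eq ..
  have s2: "sqrt 2 ^ 2 = (2::real)" by simp
  have "(deriv ^^ 4) B x
           - 2 * (be^2 - al^2) * ((deriv ^^ 2) B x + 3 * mu * (B x)^2 + (B x)^3)
           + (al^2 + be^2)^2 * B x
           + 5 * B x * (deriv B x)^2 + 5 * (B x)^2 * (deriv ^^ 2) B x
           + 3/2 * (B x)^5 + 5 * mu * (deriv B x)^2 + 10 * mu * B x * (deriv ^^ 2) B x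
           + 10 * mu^2 * (B x)^3 + 15/2 * mu * (B x)^4
      = 2 * sqrt 2 * (Phi4 x - 2 * pp * (Phi2 x + 6 * mm * Phi0 x ^2 + 8 * Phi0 x ^3) + (pp^2 + 4 * qq) * Phi0 x
          + 40 * Phi0 x * Phi1 x ^2 + 40 * Phi0 x ^2 * Phi2 x + 96 * Phi0 x ^5 + 10 * mm * Phi1 x ^2
          + 20 * mm * Phi0 x * Phi2 x + 40 * mm^2 * Phi0 x ^3 + 120 * mm * Phi0 x ^4)"
    unfolding Beq f4 f2 derivB pp_def qq_def mm_def by (rule fin_alg) (rule s2)
  also have "Phi4 x - 2 * pp * (Phi2 x + 6 * mm * Phi0 x ^2 + 8 * Phi0 x ^3) + (pp^2 + 4 * qq) * Phi0 x
          + 40 * Phi0 x * Phi1 x ^2 + 40 * Phi0 x ^2 * Phi2 x + 96 * Phi0 x ^5 + 10 * mm * Phi1 x ^2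
          + 20 * mm * Phi0 x * Phi2 x + 40 * mm^2 * Phi0 x ^3 + 120 * mm * Phi0 x ^4 = -(V3f x)* pp - 10* (V2f x)* (U3f x) + 10* (V2f x)^2* mm - 10* (U2f x)* (V3f x) + (ff x)* pp^2 + 20* (ff x)* (V3f x)* mm + 10* (ff x)* (V2f x)^2 + (ff x)* (U2f x)* pp + 30* (ff x)* (U2f x)^2 - 12* (ff x)^2* pp* mm + 20* (ff x)^2* (V3f x) - 60* (ff x)^2* (U2f x)* mm + 40* (ff x)^3* mm^2 - 12* (ff x)^3* pp - 60* (ff x)^3* (U2f x) + 80* (ff x)^4* mm + 40* (ff x)^5 + (Rf x)* (V2f x)* pp + 60* (Rf x)* (U2f x)* (V2f x) + 40* (Rf x)* (ff x)* (U3f x) - 100* (Rf x)* (ff x)* (V2f x)* mm - 100* (Rf x)* (ff x)^2* (V2f x) + 20* (Rf x)^2* (V3f x) - 12* (Rf x)^2* (ff x)* pp - 180* (Rf x)^2* (ff x)* (U2f x) + 160* (Rf x)^2* (ff x)^2* mm + 160* (Rf x)^2* (ff x)^3 - 60* (Rf x)^3* (V2f x) + 120* (Rf x)^4* (ff x)"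
    unfolding Phi0_def Phi1_def Phi2_def Phi3_def Phi4_def by algebra
  also have "-(V3f x)* pp - 10* (V2f x)* (U3f x) + 10* (V2f x)^2* mm - 10* (U2f x)* (V3f x) + (ff x)* pp^2 + 20* (ff x)* (V3f x)* mm + 10* (ff x)* (V2f x)^2 + (ff x)* (U2f x)* pp + 30* (ff x)* (U2f x)^2 - 12* (ff x)^2* pp* mm + 20* (ff x)^2* (V3f x) - 60* (ff x)^2* (U2f x)* mm + 40* (ff x)^3* mm^2 - 12* (ff x)^3* pp - 60* (ff x)^3* (U2f x) + 80* (ff x)^4* mm + 40* (ff x)^5 + (Rf x)* (V2f x)* pp + 60* (Rf x)* (U2f x)* (V2f x) + 40* (Rf x)* (ff x)* (U3f x) - 100* (Rf x)* (ff x)* (V2f x)* mm - 100* (Rf x)* (ff x)^2* (V2f x) + 20* (Rf x)^2* (V3f x) - 12* (Rf x)^2* (ff x)* pp - 180* (Rf x)^2* (ff x)* (U2f x) + 160* (Rf x)^2* (ff x)^2* mm + 160* (Rf x)^2* (ff x)^3 - 60* (Rf x)^3* (V2f x) + 120* (Rf x)^4* (ff x) = 0" by (rule TT0)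
  finally show ?thesis by simp
qed

end

theorem theorem3p6:
  fixes \<alpha> \<beta> \<mu> x1 x2 t x :: real
  assumes "\<alpha> \<noteq> 0" and "\<beta> \<noteq> 0" and "\<mu> \<noteq> 0"
    and "gardner_Delta \<alpha> \<beta> \<mu> > 0"
  defines "B \<equiv> gardner_breather \<alpha> \<beta> \<mu> x1 x2 t"
  shows "(deriv ^^ 4) B x
           - 2 * (\<beta>^2 - \<alpha>^2) * ((deriv ^^ 2) B x + 3 * \<mu> * (B x)^2 + (B x)^3)
           + (\<alpha>^2 + \<beta>^2)^2 * B x
           + 5 * B x * (deriv B x)^2 + 5 * (B x)^2 * (deriv ^^ 2) B x
           + 3/2 * (B x)^5 + 5 * \<mu> * (deriv B x)^2 + 10 * \<mu> * B x * (deriv ^^ 2) B x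
           + 10 * \<mu>^2 * (B x)^3 + 15/2 * \<mu> * (B x)^4 = 0"
  unfolding B_def by (rule final_ctx[OF assms(1-4)])

end
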